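(* For $t\in\{1,2,\dots\}\cup\{\infty\}$ let $r_t$ be the radius of convergence of $f_t(x)=\sum_{n\ge0}c^{(t)}_nx^n$, where $c^{(t)}_n$ is the number of permutations of $\{1,\dots,n\}$ in $\mathcal F(1,t)$. Then $r_1=1/4$, $r_\infty=1/5$, and there are constants $C>0$ and $0<c<1$ such that $0\le r_t-1/5\le Cc^t$ for all integers $t\ge1$.
   Context: Forkstack sorting with capacities $s,t\in\{1,2,3,\dots\}\cup\{\infty\}$: a permutation $\pi=\pi_1\cdots\pi_n$ of $\{1,\dots,n\}$ is placed on an input stack with $\pi_1$ on top; a working stack and an output stack are initially empty. A move either (i) removes the top $k$ elements of the input stack ($1\le k\le s$) and places them as a block, relative order unchanged, on top of the working stack, or (ii) removes the top $l$ elements of the working stack ($1\le l\le t$) and places them as a block, relative order unchanged, on top of the output stack. $\pi$ is sortable if some sequence of moves ends with input and working stacks empty and the output stack reading $1,2,\dots,n$ from top to bottom. $\mathcal F(s,t)$ is the set of sortable permutations. *)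

theory Defs
  imports "HOL-Analysis.Analysis" "HOL-Library.Extended_Nat"
begin

text \<open>Configurations (input, working, output); each stack is a list whose head is the top.\<close>
type_synonym config = "nat list \<times> nat list \<times> nat list"

inductive fs_move :: "enat \<Rightarrow> enat \<Rightarrow> config \<Rightarrow> config \<Rightarrow> bool" for s t where
  push: "\<lbrakk>1 \<le> k; enat k \<le> s; k \<le> length inp\<rbrakk> \<Longrightarrow>
         fs_move s t (inp, w, out) (drop k inp, take k inp @ w, out)"
| pop: "\<lbrakk>1 \<le> l; enat l \<le> t; l \<le> length w\<rbrakk> \<Longrightarrow>
         fs_move s t (inp, w, out) (inp, drop l w, take l w @ out)"

definition forkstack_sortable :: "enat \<Rightarrow> enat \<Rightarrow> nat list \<Rightarrow> bool" where
  "forkstack_sortable s t \<pi> \<longleftrightarrow>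
     (fs_move s t)\<^sup>*\<^sup>* (\<pi>, [], []) ([], [], [1..<length \<pi> + 1])"

text \<open>Permutations of {1..n} as lists (first entry on top of the input stack).\<close>
definition perms_of :: "nat \<Rightarrow> nat list set" where
  "perms_of n = {\<pi>. distinct \<pi> \<and> set \<pi> = {1..n}}"

definition fs_count :: "enat \<Rightarrow> enat \<Rightarrow> nat \<Rightarrow> nat" where
  "fs_count s t n = card {\<pi> \<in> perms_of n. forkstack_sortable s t \<pi>}"

definition r_rad :: "enat \<Rightarrow> ereal" where
  "r_rad t = conv_radius (\<lambda>n. real (fs_count 1 t n))"

end

theory Submission
  imports Defs
begin


datatype mv = Psh | Pp nat

fun exec :: "mv list \<Rightarrow> config \<Rightarrow> config option" where
  "exec [] c = Some c"
| "exec (Psh # r) (i, w, ot) = (case i of [] \<Rightarrow> None | x # i' \<Rightarrow> exec r (i', x # w, ot))"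
| "exec (Pp l # r) (i, w, ot) = (if 1 \<le> l \<and> l \<le> length w then exec r (i, drop l w, take l w @ ot) else None)"

definition pops_le :: "enat \<Rightarrow> mv list \<Rightarrow> bool" where
  "pops_le t ws \<longleftrightarrow> (\<forall>l. Pp l \<in> set ws \<longrightarrow> enat l \<le> t)"

lemma exec_append: "exec (u @ v) c = (case exec u c of None \<Rightarrow> None | Some c' \<Rightarrow> exec v c')"
proof (induction u arbitrary: c)
  case Nil then show ?case by simp
next
  case (Cons a u)
  obtain i w ot where c: "c = (i, w, ot)" by (cases c)
  show ?case
  proof (cases a)
    case Psh then show ?thesis using Cons c by (cases i) auto
  next
    case (Pp l) then show ?thesis using Cons c by auto
  qed
qed

lemma fs_move_exec:
  assumes "fs_move 1 t c c'"
  shows "\<exists>a. exec [a] c = Some c' \<and> pops_le t [a]"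
  using assms
proof cases
  case (push k inp w out)
  then have k: "k = 1" by (simp add: one_enat_def)
  show ?thesis using push k
    by (intro exI[of _ Psh]) (cases inp, auto simp: pops_le_def)
next
  case (pop l w inp out)
  then show ?thesis by (intro exI[of _ "Pp l"]) (auto simp: pops_le_def)
qed

lemma rtranclp_exec:
  assumes "(fs_move 1 t)\<^sup>*\<^sup>* c c'"
  shows "\<exists>ws. exec ws c = Some c' \<and> pops_le t ws"
  using assms
proof (induction rule: rtranclp_induct)
  case base
  then show ?case by (intro exI[of _ "[]"]) (auto simp: pops_le_def)
next
  case (step y z)
  then obtain ws where ws: "exec ws c = Some y" "pops_le t ws" by blast
  from fs_move_exec[OF step(2)] obtain a where a: "exec [a] y = Some z" "pops_le t [a]" by blast
  show ?case using ws a
    by (intro exI[of _ "ws @ [a]"]) (auto simp: exec_append pops_le_def)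
qed

lemma exec_rtranclp:
  assumes "exec ws c = Some c'" "pops_le t ws"
  shows "(fs_move 1 t)\<^sup>*\<^sup>* c c'"
  using assms
proof (induction ws arbitrary: c)
  case Nil then show ?case by simp
next
  case (Cons a r)
  obtain i w ot where c: "c = (i, w, ot)" by (cases c)
  have pr: "pops_le t r" using Cons.prems(2) by (auto simp: pops_le_def)
  show ?case
  proof (cases a)
    case Psh
    then obtain x i' where i: "i = x # i'" using Cons.prems c by (cases i) auto
    have e: "exec r (i', x # w, ot) = Some c'" using Cons.prems c i Psh by simp
    have "fs_move 1 t (i, w, ot) (drop 1 i, take 1 i @ w, ot)"
      by (rule fs_move.push) (auto simp: i one_enat_def)
    then have "fs_move 1 t c (i', x # w, ot)" using c i by simp
    then show ?thesis using Cons.IH[OF e pr] by (rule converse_rtranclp_into_rtranclp)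
  next
    case (Pp l)
    have l: "1 \<le> l" "l \<le> length w" and e: "exec r (i, drop l w, take l w @ ot) = Some c'"
      using Cons.prems c Pp by (auto split: if_splits)
    have lt: "enat l \<le> t" using Cons.prems(2) Pp by (auto simp: pops_le_def)
    have "fs_move 1 t c (i, drop l w, take l w @ ot)"
      unfolding c by (rule fs_move.pop) (use l lt in auto)
    then show ?thesis using Cons.IH[OF e pr] by (rule converse_rtranclp_into_rtranclp)
  qed
qed

lemma sortable_iff:
  "forkstack_sortable 1 t \<pi> \<longleftrightarrow> (\<exists>ws. exec ws (\<pi>, [], []) = Some ([], [], [1..<length \<pi> + 1]) \<and> pops_le t ws)"
  unfolding forkstack_sortable_def using rtranclp_exec exec_rtranclp by blast

lemma exec_inj:
  assumes "exec ws c1 = Some c'" "exec ws c2 = Some c'"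
  shows "c1 = c2"
  using assms
proof (induction ws arbitrary: c1 c2)
  case Nil then show ?case by simp
next
  case (Cons a r)
  obtain i1 w1 ot1 where c1: "c1 = (i1, w1, ot1)" by (cases c1)
  obtain i2 w2 ot2 where c2: "c2 = (i2, w2, ot2)" by (cases c2)
  show ?case
  proof (cases a)
    case Psh
    obtain x1 j1 where i1: "i1 = x1 # j1" using Cons.prems c1 Psh by (cases i1) auto
    obtain x2 j2 where i2: "i2 = x2 # j2" using Cons.prems c2 Psh by (cases i2) auto
    have "(j1, x1 # w1, ot1) = (j2, x2 # w2, ot2)"
      using Cons.IH[of "(j1, x1 # w1, ot1)" "(j2, x2 # w2, ot2)"] Cons.prems c1 c2 i1 i2 Psh by simp
    then show ?thesis using c1 c2 i1 i2 by simp
  next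
    case (Pp l)
    have l1: "l \<le> length w1" and l2: "l \<le> length w2"
      using Cons.prems c1 c2 Pp by (auto split: if_splits)
    have eq: "(i1, drop l w1, take l w1 @ ot1) = (i2, drop l w2, take l w2 @ ot2)"
      using Cons.IH[of "(i1, drop l w1, take l w1 @ ot1)" "(i2, drop l w2, take l w2 @ ot2)"]
        Cons.prems c1 c2 Pp by (auto split: if_splits)
    then have "take l w1 = take l w2" "ot1 = ot2" using l1 l2
      by (auto simp: append_eq_append_conv)
    then have "w1 = w2" using eq by (metis append_take_drop_id prod.inject)
    then show ?thesis using eq c1 c2 \<open>ot1 = ot2\<close> by simp
  qed
qed



declare upt_Suc[simp del]

fun canon :: "bool \<Rightarrow> mv list \<Rightarrow> bool" where
  "canon f [] = True"
| "canon f (Psh # r) = canon False r"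
| "canon f (Pp l # r) = ((2 \<le> l \<longrightarrow> f) \<and> canon True r)"

lemma not_canon:
  "\<not> canon f ws \<Longrightarrow> (\<exists>l r. ws = Pp l # r \<and> 2 \<le> l \<and> \<not> f) \<or> (\<exists>u v l. 2 \<le> l \<and> ws = u @ Psh # Pp l # v)"
proof (induction ws arbitrary: f)
  case Nil then show ?case by simp
next
  case (Cons a r)
  show ?case
  proof (cases a)
    case Psh
    then have "\<not> canon False r" using Cons.prems by simp
    from Cons.IH[OF this] show ?thesis
    proof
      assume "\<exists>l r'. r = Pp l # r' \<and> 2 \<le> l \<and> \<not> False"
      then obtain l r' where "r = Pp l # r'" "2 \<le> l" by blast
      then show ?thesis using Psh by (intro disjI2 exI[of _ "[]"] exI[of _ r'] exI[of _ l]) auto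
    next
      assume "\<exists>u v l. 2 \<le> l \<and> r = u @ Psh # Pp l # v"
      then obtain u v l where "2 \<le> l" "r = u @ Psh # Pp l # v" by blast
      then show ?thesis using Psh by (intro disjI2 exI[of _ "Psh # u"] exI[of _ v] exI[of _ l]) auto
    qed
  next
    case (Pp l)
    show ?thesis
    proof (cases "2 \<le> l \<and> \<not> f")
      case True then show ?thesis using Pp by auto
    next
      case False
      then have "\<not> canon True r" using Cons.prems Pp by auto
      from Cons.IH[OF this] obtain u v l' where "2 \<le> l'" "r = u @ Psh # Pp l' # v" by blast
      then show ?thesis using Pp by (intro disjI2 exI[of _ "Pp l # u"] exI[of _ v] exI[of _ l']) auto
    qed
  qed
qed

lemma exec_rewrite:
  assumes "2 \<le> l" "exec (Psh # Pp l # v) c = Some c'"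
  shows "exec (Pp (l - 1) # Psh # Pp 1 # v) c = Some c'"
proof -
  obtain i w ot where c: "c = (i, w, ot)" by (cases c)
  obtain x i' where i: "i = x # i'" using assms c by (cases i) auto
  have l: "l \<le> Suc (length w)" and e: "exec v (i', drop l (x # w), take l (x # w) @ ot) = Some c'"
    using assms c i by (auto split: if_splits)
  have d: "drop l (x # w) = drop (l - 1) w" "take l (x # w) = x # take (l - 1) w"
    using assms(1) by (cases l; simp)+
  show ?thesis using assms(1) l e c i d by auto
qed

definition mu :: "mv list \<Rightarrow> nat" where
  "mu ws = sum_list (map (\<lambda>a. case a of Psh \<Rightarrow> 0 | Pp l \<Rightarrow> l - 1) ws)"

lemma canon_exists_aux:
  "\<forall>ws. mu ws = m \<longrightarrow> exec ws (i, [], ot) = Some c' \<longrightarrow> pops_le t ws \<longrightarrow>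
     (\<exists>ws'. exec ws' (i, [], ot) = Some c' \<and> pops_le t ws' \<and> canon False ws')"
proof (induction m rule: less_induct)
  case (less m)
  show ?case
  proof (intro allI impI)
    fix ws assume m: "mu ws = m" and e: "exec ws (i, [], ot) = Some c'" and p: "pops_le t ws"
    show "\<exists>ws'. exec ws' (i, [], ot) = Some c' \<and> pops_le t ws' \<and> canon False ws'"
    proof (cases "canon False ws")
      case True then show ?thesis using e p by blast
    next
      case False
      from not_canon[OF False] show ?thesis
      proof
        assume "\<exists>l r. ws = Pp l # r \<and> 2 \<le> l \<and> \<not> False"
        then obtain l r where "ws = Pp l # r" "2 \<le> l" by blast
        then have False using e by simp
        then show ?thesis ..
      next
        assume "\<exists>u v l. 2 \<le> l \<and> ws = u @ Psh # Pp l # v"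
        then obtain u v l where l: "2 \<le> l" and ws: "ws = u @ Psh # Pp l # v" by blast
        define ws2 where "ws2 = u @ Pp (l - 1) # Psh # Pp 1 # v"
        obtain c1 where c1: "exec u (i, [], ot) = Some c1" "exec (Psh # Pp l # v) c1 = Some c'"
          using e ws by (auto simp: exec_append split: option.splits)
        have e2: "exec ws2 (i, [], ot) = Some c'"
          using exec_rewrite[OF l c1(2)] c1(1) by (simp add: ws2_def exec_append)
        have lt: "enat l \<le> t" using p ws by (auto simp: pops_le_def)
        have lt1: "enat (l - 1) \<le> t" using lt by (meson diff_le_self enat_ord_simps(1) order_trans)
        have lt2: "enat 1 \<le> t" using lt l by (meson enat_ord_simps(1) order_trans one_le_numeral le_trans)
        have p2: "pops_le t ws2" using p lt1 lt2 unfolding ws2_def pops_le_def ws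
          by auto
        have "mu ws2 < m" using m l unfolding ws ws2_def mu_def by simp
        then show ?thesis using less.IH e2 p2 by blast
      qed
    qed
  qed
qed

lemma canon_exists:
  assumes "exec ws (i, [], ot) = Some c'" "pops_le t ws"
  shows "\<exists>ws'. exec ws' (i, [], ot) = Some c' \<and> pops_le t ws' \<and> canon False ws'"
  using canon_exists_aux assms by blast

lemma exec_out: "exec ws c = Some c' \<Longrightarrow> \<exists>p. snd (snd c') = p @ snd (snd c)"
proof (induction ws arbitrary: c)
  case Nil then show ?case by simp
next
  case (Cons a r)
  obtain i w ot where c: "c = (i, w, ot)" by (cases c)
  show ?case
  proof (cases a)
    case Psh
    then obtain x i' where "i = x # i'" using Cons.prems c by (cases i) auto
    then show ?thesis using Cons c Psh by auto
  next
    case (Pp l)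
    then have e: "exec r (i, drop l w, take l w @ ot) = Some c'" using Cons.prems c by (auto split: if_splits)
    from Cons.IH[OF e] show ?thesis using c by auto
  qed
qed

definition allm :: "config \<Rightarrow> nat list" where
  "allm c = fst c @ fst (snd c) @ snd (snd c)"

lemma exec_mset: "exec ws c = Some c' \<Longrightarrow> mset (allm c') = mset (allm c)"
proof (induction ws arbitrary: c)
  case Nil then show ?case by simp
next
  case (Cons a r)
  obtain i w ot where c: "c = (i, w, ot)" by (cases c)
  show ?case
  proof (cases a)
    case Psh
    then obtain x i' where i: "i = x # i'" using Cons.prems c by (cases i) auto
    then show ?thesis using Cons c Psh by (auto simp: allm_def)
  next
    case (Pp l)
    then have e: "exec r (i, drop l w, take l w @ ot) = Some c'" using Cons.prems c by (auto split: if_splits)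
    have "mset (drop l w) + mset (take l w) = mset w"
      by (metis append_take_drop_id mset_append union_commute)
    then show ?thesis using Cons.IH[OF e] c by (simp add: allm_def ac_simps)
  qed
qed

lemma suffix_upt:
  assumes "[1..<n+1] = p @ ot"
  shows "ot = [n + 1 - length ot..<n+1]"
proof -
  have "ot = drop (length p) [1..<n+1]" using assms by simp
  also have "\<dots> = [1 + length p..<n+1]" by simp
  also have "length p = n - length ot" using arg_cong[OF assms, of length] by simp
  finally show ?thesis using arg_cong[OF assms, of length] by simp
qed

lemma pop_value:
  assumes "exec (Pp l # r) (i, w, ot) = Some ([], [], [1..<n+1])"
  shows "1 \<le> l \<and> l \<le> length w \<and> w ! (l - 1) = n - length ot"
proof -
  have l: "1 \<le> l" "l \<le> length w" and e: "exec r (i, drop l w, take l w @ ot) = Some ([], [], [1..<n+1])"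
    using assms by (auto split: if_splits)
  from exec_out[OF e] obtain p where p: "[1..<n+1] = p @ take l w @ ot" by auto
  have len: "length p + l + length ot = n" using arg_cong[OF p, of length] l by simp
  have s: "take l w @ ot = [n + 1 - (l + length ot)..<n+1]"
    using suffix_upt[of n p "take l w @ ot"] p l by simp
  have "(take l w @ ot) ! (l - 1) = w ! (l - 1)" using l by (simp add: nth_append)
  moreover have "[n + 1 - (l + length ot)..<n+1] ! (l - 1) = n - length ot"
    using len l by (subst nth_upt) auto
  ultimately show ?thesis using s l by simp
qed

lemma keylemma:
  assumes "exec ws (i, w, ot) = Some ([], [], [1..<n+1])" "canon False ws" "distinct (i @ w @ ot)"
    "1 \<le> k" "k < length w" "w ! k = n - length ot"
  shows False
  using assms
proof (induction ws arbitrary: i w k)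
  case Nil then show ?case by simp
next
  case (Cons a r)
  show ?case
  proof (cases a)
    case Psh
    then obtain x i' where i: "i = x # i'" using Cons.prems by (cases i) auto
    have e: "exec r (i', x # w, ot) = Some ([], [], [1..<n+1])" using Cons.prems i Psh by simp
    show ?thesis
      by (rule Cons.IH[OF e, of "Suc k"]) (use Cons.prems i Psh in auto)
  next
    case (Pp l)
    then have "l = 1" using Cons.prems by (auto split: if_splits)
    from pop_value[of l r i w ot n] Cons.prems Pp this have "w ! 0 = n - length ot" by simp
    then have "w ! 0 = w ! k" using Cons.prems by simp
    moreover have "distinct w" using Cons.prems by simp
    moreover have "0 < length w" "k < length w" using Cons.prems by auto
    ultimately have "0 = k" using nth_eq_iff_index_eq by metis
    then show ?thesis using Cons.prems by simp
  qed
qed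

lemma canon_unique:
  assumes "exec ws1 (i, w, ot) = Some ([], [], [1..<n+1])" "exec ws2 (i, w, ot) = Some ([], [], [1..<n+1])"
    "canon f ws1" "canon f ws2" "distinct (i @ w @ ot)"
  shows "ws1 = ws2"
  using assms
proof (induction ws1 arbitrary: ws2 i w ot f)
  case Nil
  then have "i = []" "w = []" by auto
  then show ?case using Nil by (cases ws2; cases "hd ws2") (auto split: if_splits)
next
  case (Cons a r1)
  show ?case
  proof (cases ws2)
    case Nil
    then have "i = []" "w = []" using Cons.prems by auto
    then show ?thesis using Cons.prems by (cases a) (auto split: if_splits)
  next
    case (Cons b r2)
    show ?thesis
    proof (cases a)
      case Psh
      then obtain x i' where i: "i = x # i'" using Cons.prems by (cases i) auto
      have e1: "exec r1 (i', x # w, ot) = Some ([], [], [1..<n+1])" using Cons.prems i Psh by simp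
      have d1: "distinct (i' @ (x # w) @ ot)" using Cons.prems(5) i by auto
      show ?thesis
      proof (cases b)
        case Psh
        have e2: "exec r2 (i', x # w, ot) = Some ([], [], [1..<n+1])" using Cons.prems i Psh \<open>ws2 = b # r2\<close> by simp
        show ?thesis using Cons.IH[OF e1 e2 _ _ d1, of False] Cons.prems \<open>ws2 = b # r2\<close> \<open>a = mv.Psh\<close> Psh by simp
      next
        case (Pp l)
        from pop_value[of l r2 i w ot n] Cons.prems Pp \<open>ws2 = b # r2\<close>
        have pv: "1 \<le> l" "l \<le> length w" "w ! (l - 1) = n - length ot" by auto
        have "False"
          by (rule keylemma[OF e1 _ d1, of l]) (use Cons.prems \<open>a = mv.Psh\<close> pv in auto)
        then show ?thesis ..
      qed
    next
      case (Pp l1)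
      from pop_value[of l1 r1 i w ot n] Cons.prems Pp
      have pv1: "1 \<le> l1" "l1 \<le> length w" "w ! (l1 - 1) = n - length ot" by auto
      have e1: "exec r1 (i, drop l1 w, take l1 w @ ot) = Some ([], [], [1..<n+1])"
        using Cons.prems Pp by (auto split: if_splits)
      show ?thesis
      proof (cases b)
        case Psh
        then obtain x i' where i: "i = x # i'" using Cons.prems \<open>ws2 = b # r2\<close> by (cases i) auto
        have e2: "exec r2 (i', x # w, ot) = Some ([], [], [1..<n+1])" using Cons.prems i Psh \<open>ws2 = b # r2\<close> by simp
        have d2: "distinct (i' @ (x # w) @ ot)" using Cons.prems(5) i by auto
        have "False"
          by (rule keylemma[OF e2 _ d2, of l1]) (use Cons.prems \<open>ws2 = b # r2\<close> Psh pv1 in auto)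
        then show ?thesis ..
      next
        case (Pp l2)
        from pop_value[of l2 r2 i w ot n] Cons.prems Pp \<open>ws2 = b # r2\<close>
        have pv2: "1 \<le> l2" "l2 \<le> length w" "w ! (l2 - 1) = n - length ot" by auto
        have "distinct w" using Cons.prems(5) by simp
        then have "l1 - 1 = l2 - 1" using pv1 pv2 nth_eq_iff_index_eq[of w "l1 - 1" "l2 - 1"] by simp
        then have l: "l1 = l2" using pv1 pv2 by simp
        have e2: "exec r2 (i, drop l1 w, take l1 w @ ot) = Some ([], [], [1..<n+1])"
          using Cons.prems Pp \<open>ws2 = b # r2\<close> l by (auto split: if_splits)
        have d: "distinct (i @ drop l1 w @ take l1 w @ ot)"
        proof -
          have "mset (i @ drop l1 w @ take l1 w @ ot) = mset (i @ w @ ot)"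
            by (metis append_take_drop_id mset_append union_commute union_assoc)
          then show ?thesis using Cons.prems(5) mset_eq_imp_distinct_iff by blast
        qed
        have "r1 = r2" using Cons.IH[OF e1 e2 _ _, of True] d Cons.prems \<open>ws2 = b # r2\<close> \<open>a = Pp l1\<close> Pp l by simp
        then show ?thesis using \<open>ws2 = b # r2\<close> \<open>a = Pp l1\<close> Pp l by simp
      qed
    qed
  qed
qed



fun rwalk :: "enat \<Rightarrow> nat \<Rightarrow> bool \<Rightarrow> mv list \<Rightarrow> (nat \<times> bool) option" where
  "rwalk t h g [] = Some (h, g)"
| "rwalk t h g (Psh # r) = (if \<not> g \<and> 0 < h then rwalk t (h - 1) False r else None)"
| "rwalk t h g (Pp l # r) = (if 1 \<le> l \<and> enat l \<le> t then rwalk t (h + l) (2 \<le> l) r else None)"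

fun fwalk :: "enat \<Rightarrow> nat \<Rightarrow> bool \<Rightarrow> mv list \<Rightarrow> (nat \<times> bool) option" where
  "fwalk t h f [] = Some (h, f)"
| "fwalk t h f (Psh # r) = fwalk t (Suc h) False r"
| "fwalk t h f (Pp l # r) = (if 1 \<le> l \<and> enat l \<le> t \<and> l \<le> h \<and> (2 \<le> l \<longrightarrow> f) then fwalk t (h - l) True r else None)"

lemma fwalk_append:
  "fwalk t h f (u @ v) = (case fwalk t h f u of None \<Rightarrow> None | Some (h', f') \<Rightarrow> fwalk t h' f' v)"
  by (induction t h f u rule: fwalk.induct) auto

lemma rwalk_append:
  "rwalk t h g (u @ v) = (case rwalk t h g u of None \<Rightarrow> None | Some (h', g') \<Rightarrow> rwalk t h' g' v)"
  by (induction t h g u rule: rwalk.induct) auto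

lemma f2r:
  assumes "fwalk t h f ws = Some (h', f')" "g0 \<longrightarrow> f'"
  shows "\<exists>g. rwalk t h' g0 (rev ws) = Some (h, g) \<and> (g \<longrightarrow> f)"
  using assms
proof (induction ws arbitrary: h' f' g0 rule: rev_induct)
  case Nil then show ?case by auto
next
  case (snoc a vs)
  obtain h1 f1 where v: "fwalk t h f vs = Some (h1, f1)" and s: "fwalk t h1 f1 [a] = Some (h', f')"
    using snoc.prems(1) by (auto simp: fwalk_append split: option.splits)
  show ?case
  proof (cases a)
    case Psh
    then have "h' = Suc h1" "f' = False" using s by auto
    then have "g0 = False" using snoc.prems(2) by simp
    from snoc.IH[OF v, of False] obtain g where "rwalk t h1 False (rev vs) = Some (h, g) \<and> (g \<longrightarrow> f)" by auto
    then show ?thesis using Psh \<open>h' = Suc h1\<close> \<open>g0 = False\<close> by auto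
  next
    case (Pp l)
    then have c: "1 \<le> l" "enat l \<le> t" "l \<le> h1" "2 \<le> l \<longrightarrow> f1" "h' = h1 - l" "f' = True"
      using s by (auto split: if_splits)
    from snoc.IH[OF v, of "2 \<le> l"] c obtain g where "rwalk t h1 (2 \<le> l) (rev vs) = Some (h, g) \<and> (g \<longrightarrow> f)" by auto
    then show ?thesis using Pp c by auto
  qed
qed

lemma r2f:
  assumes "rwalk t h' g0 w = Some (h, g)" "g \<longrightarrow> f"
  shows "\<exists>f'. fwalk t h f (rev w) = Some (h', f') \<and> (g0 \<longrightarrow> f')"
  using assms
proof (induction w arbitrary: h' g0)
  case Nil then show ?case by auto
next
  case (Cons a r)
  show ?case
  proof (cases a)
    case Psh
    then have c: "\<not> g0" "0 < h'" "rwalk t (h' - 1) False r = Some (h, g)" using Cons.prems by (auto split: if_splits)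
    from Cons.IH[OF c(3) Cons.prems(2)] obtain f1 where "fwalk t h f (rev r) = Some (h' - 1, f1)" by auto
    then show ?thesis using c Psh by (auto simp: fwalk_append)
  next
    case (Pp l)
    then have c: "1 \<le> l" "enat l \<le> t" "rwalk t (h' + l) (2 \<le> l) r = Some (h, g)" using Cons.prems by (auto split: if_splits)
    from Cons.IH[OF c(3) Cons.prems(2)] obtain f1 where "fwalk t h f (rev r) = Some (h' + l, f1)" "2 \<le> l \<longrightarrow> f1" by auto
    then show ?thesis using c Pp by (auto simp: fwalk_append)
  qed
qed

lemma exec_fwalk:
  assumes "exec ws (i, w, ot) = Some (i', w', ot')" "canon f ws" "pops_le t ws"
  shows "\<exists>f'. fwalk t (length w) f ws = Some (length w', f')"
  using assms
proof (induction ws arbitrary: i w ot f)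
  case Nil then show ?case by auto
next
  case (Cons a r)
  have pr: "pops_le t r" using Cons.prems(3) by (auto simp: pops_le_def)
  show ?case
  proof (cases a)
    case Psh
    then obtain x j where i: "i = x # j" using Cons.prems by (cases i) auto
    have e: "exec r (j, x # w, ot) = Some (i', w', ot')" using Cons.prems i Psh by simp
    from Cons.IH[OF e _ pr, of False] Cons.prems Psh show ?thesis by auto
  next
    case (Pp l)
    have c: "1 \<le> l" "l \<le> length w" and e: "exec r (i, drop l w, take l w @ ot) = Some (i', w', ot')"
      using Cons.prems Pp by (auto split: if_splits)
    have lt: "enat l \<le> t" using Cons.prems(3) Pp by (auto simp: pops_le_def)
    from Cons.IH[OF e _ pr, of True] Cons.prems Pp c lt show ?thesis by auto
  qed
qed

lemma fwalk_canon: "fwalk t h f ws = Some x \<Longrightarrow> canon f ws \<and> pops_le t ws"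
  by (induction t h f ws rule: fwalk.induct) (auto simp: pops_le_def split: if_splits)

lemma rwalk_pops: "rwalk t h g w = Some x \<Longrightarrow> pops_le t w"
  by (induction t h g w rule: rwalk.induct) (auto simp: pops_le_def split: if_splits)

definition npsh :: "mv list \<Rightarrow> nat" where
  "npsh ws = length (filter (\<lambda>a. a = Psh) ws)"

definition sumpp :: "mv list \<Rightarrow> nat" where
  "sumpp ws = sum_list (map (\<lambda>a. case a of Psh \<Rightarrow> 0 | Pp l \<Rightarrow> l) ws)"

lemma npsh_simps [simp]: "npsh [] = 0" "npsh (Psh # r) = Suc (npsh r)" "npsh (Pp l # r) = npsh r"
  "npsh (u @ v) = npsh u + npsh v" "npsh (rev u) = npsh u"
  by (auto simp: npsh_def rev_filter[symmetric])

lemma sumpp_simps [simp]: "sumpp [] = 0" "sumpp (Psh # r) = sumpp r" "sumpp (Pp l # r) = l + sumpp r"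
  "sumpp (u @ v) = sumpp u + sumpp v"
  by (auto simp: sumpp_def)

lemma exec_npsh: "exec ws (i, w, ot) = Some (i', w', ot') \<Longrightarrow> length i = npsh ws + length i'"
proof (induction ws arbitrary: i w ot)
  case Nil then show ?case by simp
next
  case (Cons a r)
  show ?case
  proof (cases a)
    case Psh
    then obtain x j where i: "i = x # j" using Cons.prems by (cases i) auto
    then show ?thesis using Cons Psh by simp
  next
    case (Pp l)
    then show ?thesis using Cons by (auto split: if_splits)
  qed
qed

lemma rwalk_count: "rwalk t h g w = Some (h', g') \<Longrightarrow> h + sumpp w = h' + npsh w"
  by (induction t h g w rule: rwalk.induct) (auto split: if_splits)

lemma rwalk_len: "rwalk t h g w = Some (h', g') \<Longrightarrow> length w \<le> npsh w + sumpp w"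
proof (induction t h g w rule: rwalk.induct)
  case (3 t h g l r)
  then show ?case by (auto split: if_splits)
qed (auto split: if_splits)

lemma rwalk_letters: "rwalk t h g w = Some (h', g') \<Longrightarrow> Pp l \<in> set w \<Longrightarrow> l \<le> sumpp w"
  by (induction t h g w rule: rwalk.induct) (auto split: if_splits)

fun rexec :: "mv list \<Rightarrow> config \<Rightarrow> config option" where
  "rexec [] c = Some c"
| "rexec (Psh # r) (i, w, ot) = (case w of [] \<Rightarrow> None | x # w' \<Rightarrow> rexec r (x # i, w', ot))"
| "rexec (Pp l # r) (i, w, ot) = (if 1 \<le> l \<and> l \<le> length ot then rexec r (i, take l ot @ w, drop l ot) else None)"

lemma rexec_exec: "rexec w c = Some c' \<Longrightarrow> exec (rev w) c' = Some c"
proof (induction w arbitrary: c)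
  case Nil then show ?case by simp
next
  case (Cons a r)
  obtain i wk ot where c: "c = (i, wk, ot)" by (cases c)
  show ?case
  proof (cases a)
    case Psh
    then obtain x w' where wk: "wk = x # w'" using Cons.prems c by (cases wk) auto
    then have "exec (rev r) c' = Some (x # i, w', ot)" using Cons c Psh by simp
    then show ?thesis using c wk Psh by (simp add: exec_append)
  next
    case (Pp l)
    then have l: "1 \<le> l" "l \<le> length ot" using Cons.prems c by (auto split: if_splits)
    then have "exec (rev r) c' = Some (i, take l ot @ wk, drop l ot)" using Cons c Pp by simp
    then show ?thesis using c l Pp by (simp add: exec_append min_def)
  qed
qed

lemma rexec_exists:
  assumes "rwalk t h g w = Some (h', g')" "length wk = h" "sumpp w \<le> length ot"
  shows "\<exists>i' w' ot'. rexec w (i, wk, ot) = Some (i', w', ot') \<and> length w' = h' \<and> length ot' = length ot - sumpp w"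
  using assms
proof (induction w arbitrary: h g i wk ot)
  case Nil then show ?case by simp
next
  case (Cons a r)
  show ?case
  proof (cases a)
    case Psh
    then have c: "\<not> g" "0 < h" "rwalk t (h - 1) False r = Some (h', g')" using Cons.prems by (auto split: if_splits)
    then obtain x w1 where wk: "wk = x # w1" using Cons.prems by (cases wk) auto
    from Cons.IH[OF c(3), of w1 ot "x # i"] Cons.prems wk Psh show ?thesis by auto
  next
    case (Pp l)
    then have c: "1 \<le> l" "rwalk t (h + l) (2 \<le> l) r = Some (h', g')" using Cons.prems by (auto split: if_splits)
    have "length (take l ot @ wk) = h + l" using Cons.prems Pp by auto
    from Cons.IH[OF c(2) this, of "drop l ot" i] Cons.prems Pp c show ?thesis by auto
  qed
qed

lemma rexec_mset: "rexec w c = Some c' \<Longrightarrow> mset (allm c') = mset (allm c)"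
  using rexec_exec exec_mset by metis

definition Rset :: "enat \<Rightarrow> nat \<Rightarrow> mv list set" where
  "Rset t n = {w. rwalk t 0 False w = Some (0, False) \<and> npsh w = n}"

lemma Rset_sub: "Rset t n \<subseteq> {w. set w \<subseteq> insert Psh (Pp ` {..n}) \<and> length w \<le> 2 * n}"
proof
  fix w assume "w \<in> Rset t n"
  then have r: "rwalk t 0 False w = Some (0, False)" "npsh w = n" by (auto simp: Rset_def)
  have s: "sumpp w = n" using rwalk_count[OF r(1)] r(2) by simp
  have "set w \<subseteq> insert Psh (Pp ` {..n})"
  proof
    fix a assume a: "a \<in> set w"
    show "a \<in> insert Psh (Pp ` {..n})"
    proof (cases a)
      case (Pp l) then show ?thesis using rwalk_letters[OF r(1), of l] a s by auto
    qed simp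
  qed
  then show "w \<in> {w. set w \<subseteq> insert Psh (Pp ` {..n}) \<and> length w \<le> 2 * n}"
    using rwalk_len[OF r(1)] r(2) s by auto
qed

lemma finite_Rset: "finite (Rset t n)"
  by (rule finite_subset[OF Rset_sub]) (rule finite_lists_length_le, auto)

lemma finite_perms: "finite (perms_of n)"
proof -
  have "perms_of n \<subseteq> {xs. set xs \<subseteq> {1..n} \<and> length xs \<le> n}"
    unfolding perms_of_def using distinct_card by fastforce
  then show ?thesis by (rule finite_subset) (rule finite_lists_length_le, auto)
qed

lemma perms_len: "\<pi> \<in> perms_of n \<Longrightarrow> length \<pi> = n"
  unfolding perms_of_def using distinct_card by fastforce

lemma count_le: "fs_count 1 t n \<le> card (Rset t n)"
proof -
  let ?A = "{\<pi> \<in> perms_of n. forkstack_sortable 1 t \<pi>}"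
  let ?P = "\<lambda>\<pi> ws. exec ws (\<pi>, [], []) = Some ([], [], [1..<n + 1]) \<and> canon False ws \<and> pops_le t ws"
  have ex: "\<exists>ws. ?P \<pi> ws" if "\<pi> \<in> ?A" for \<pi>
  proof -
    from that obtain ws where "exec ws (\<pi>, [], []) = Some ([], [], [1..<length \<pi> + 1])" "pops_le t ws"
      by (auto simp: sortable_iff)
    then show ?thesis using canon_exists perms_len that by fastforce
  qed
  define \<rho> where "\<rho> \<pi> = rev (SOME ws. ?P \<pi> ws)" for \<pi>
  have P: "?P \<pi> (SOME ws. ?P \<pi> ws)" if "\<pi> \<in> ?A" for \<pi> using someI_ex[OF ex[OF that]] .
  have "inj_on \<rho> ?A"
  proof
    fix \<pi>1 \<pi>2 assume a: "\<pi>1 \<in> ?A" "\<pi>2 \<in> ?A" "\<rho> \<pi>1 = \<rho> \<pi>2"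
    then have "(SOME ws. ?P \<pi>1 ws) = (SOME ws. ?P \<pi>2 ws)" by (simp add: \<rho>_def)
    then have "exec (SOME ws. ?P \<pi>1 ws) (\<pi>2, [], []) = Some ([], [], [1..<n + 1])"
      using P[OF a(2)] by simp
    then show "\<pi>1 = \<pi>2" using P[OF a(1)] exec_inj by blast
  qed
  moreover have "\<rho> ` ?A \<subseteq> Rset t n"
  proof
    fix w assume "w \<in> \<rho> ` ?A"
    then obtain \<pi> where \<pi>: "\<pi> \<in> ?A" "w = \<rho> \<pi>" by auto
    let ?ws = "SOME ws. ?P \<pi> ws"
    have p: "?P \<pi> ?ws" using P[OF \<pi>(1)] .
    from exec_fwalk[of ?ws \<pi> "[]" "[]"] p obtain f' where "fwalk t 0 False ?ws = Some (0, f')" by fastforce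
    from f2r[OF this, of False] obtain g where "rwalk t 0 False (rev ?ws) = Some (0, g)" "\<not> g" by auto
    moreover have "npsh ?ws = n" using exec_npsh[of ?ws \<pi> "[]" "[]"] p perms_len \<pi>(1) by auto
    ultimately show "w \<in> Rset t n" using \<pi>(2) by (auto simp: Rset_def \<rho>_def)
  qed
  ultimately show ?thesis unfolding fs_count_def using card_inj_on_le finite_Rset by blast
qed

lemma count_ge: "card (Rset t n) \<le> fs_count 1 t n"
proof -
  let ?A = "{\<pi> \<in> perms_of n. forkstack_sortable 1 t \<pi>}"
  have ex: "\<exists>\<pi>. rexec w ([], [], [1..<n+1]) = Some (\<pi>, [], [])" if "w \<in> Rset t n" for w
  proof -
    have r: "rwalk t 0 False w = Some (0, False)" "npsh w = n" using that by (auto simp: Rset_def)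
    have s: "sumpp w = n" using rwalk_count[OF r(1)] r(2) by simp
    from rexec_exists[OF r(1), of "[]" "[1..<n+1]" "[]"] s show ?thesis by auto
  qed
  define \<Phi> where "\<Phi> w = fst (the (rexec w ([], [], [1..<n+1])))" for w
  have Phi: "rexec w ([], [], [1..<n+1]) = Some (\<Phi> w, [], [])" if "w \<in> Rset t n" for w
    using ex[OF that] by (auto simp: \<Phi>_def)
  have ex2: "exec (rev w) (\<Phi> w, [], []) = Some ([], [], [1..<n+1])" if "w \<in> Rset t n" for w
    using rexec_exec[OF Phi[OF that]] .
  have ms: "mset (\<Phi> w) = mset [1..<n+1]" if "w \<in> Rset t n" for w
    using rexec_mset[OF Phi[OF that]] by (simp add: allm_def)
  have inA: "\<Phi> w \<in> ?A" if "w \<in> Rset t n" for w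
  proof -
    have d: "distinct (\<Phi> w)" using ms[OF that] mset_eq_imp_distinct_iff by (metis distinct_upt)
    have st: "set (\<Phi> w) = {1..n}" using ms[OF that] by (metis atLeastLessThanSuc_atLeastAtMost set_mset_mset set_upt Suc_eq_plus1)
    have len: "length (\<Phi> w) = n" using ms[OF that] by (metis length_upt size_mset diff_add_inverse2)
    have pl: "pops_le t (rev w)" using rwalk_pops that by (auto simp: Rset_def pops_le_def)
    show ?thesis using d st len ex2[OF that] pl by (auto simp: perms_of_def sortable_iff)
  qed
  have "inj_on \<Phi> (Rset t n)"
  proof
    fix w1 w2 assume a: "w1 \<in> Rset t n" "w2 \<in> Rset t n" "\<Phi> w1 = \<Phi> w2"
    have c1: "canon False (rev w1)" using r2f[of t 0 False w1 0 False False] a(1) fwalk_canon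
      by (auto simp: Rset_def)
    have c2: "canon False (rev w2)" using r2f[of t 0 False w2 0 False False] a(2) fwalk_canon
      by (auto simp: Rset_def)
    have d: "distinct (\<Phi> w1 @ [] @ [])" using inA[OF a(1)] by (auto simp: perms_of_def)
    have "rev w1 = rev w2"
      using canon_unique[OF ex2[OF a(1)] _ c1 c2 d] ex2[OF a(2)] a(3) by simp
    then show "w1 = w2" by simp
  qed
  moreover have "\<Phi> ` Rset t n \<subseteq> ?A" using inA by auto
  moreover have "finite ?A" using finite_perms by auto
  ultimately show ?thesis unfolding fs_count_def using card_inj_on_le by blast
qed

lemma count_eq: "fs_count 1 t n = card (Rset t n)"
  using count_le count_ge by (simp add: le_antisym)



definition S :: "enat \<Rightarrow> nat \<Rightarrow> nat \<Rightarrow> bool \<Rightarrow> mv list set" where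
  "S t L h g = {w. rwalk t h g w = Some (0, False) \<and> length w \<le> L}"

definition W :: "enat \<Rightarrow> real \<Rightarrow> nat \<Rightarrow> nat \<Rightarrow> bool \<Rightarrow> real" where
  "W t x L h g = (\<Sum>w\<in>S t L h g. x ^ npsh w)"

lemma S_sub: "S t L h g \<subseteq> {w. set w \<subseteq> insert Psh (Pp ` {..L}) \<and> length w \<le> L}"
proof
  fix w assume "w \<in> S t L h g"
  then have r: "rwalk t h g w = Some (0, False)" "length w \<le> L" by (auto simp: S_def)
  have c: "h + sumpp w = npsh w" using rwalk_count[OF r(1)] by simp
  have np: "npsh w \<le> length w" unfolding npsh_def by simp
  have "set w \<subseteq> insert Psh (Pp ` {..L})"
  proof
    fix a assume a: "a \<in> set w"
    show "a \<in> insert Psh (Pp ` {..L})"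
    proof (cases a)
      case (Pp l) then show ?thesis using rwalk_letters[OF r(1), of l] a c np r(2) by auto
    qed simp
  qed
  then show "w \<in> {w. set w \<subseteq> insert Psh (Pp ` {..L}) \<and> length w \<le> L}" using r by auto
qed

lemma finite_S: "finite (S t L h g)"
  by (rule finite_subset[OF S_sub]) (rule finite_lists_length_le, auto)

lemma S_mono: "L \<le> L' \<Longrightarrow> S t L h g \<subseteq> S t L' h g"
  by (auto simp: S_def)

lemma W_nonneg: "0 \<le> x \<Longrightarrow> 0 \<le> W t x L h g"
  unfolding W_def by (auto intro: sum_nonneg)

lemma W_mono: "0 \<le> x \<Longrightarrow> L \<le> L' \<Longrightarrow> W t x L h g \<le> W t x L' h g"
  unfolding W_def by (rule sum_mono2[OF finite_S S_mono]) auto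

lemma S_0: "S t 0 h g = (if h = 0 \<and> \<not> g then {[]} else {})"
  by (auto simp: S_def)

lemma S_Suc: "S t (Suc L) h g =
   (if h = 0 \<and> \<not> g then {[]} else {}) \<union>
   (if \<not> g \<and> 0 < h then Cons Psh ` S t L (h - 1) False else {}) \<union>
   (\<Union>l\<in>{l. 1 \<le> l \<and> l \<le> L \<and> enat l \<le> t}. Cons (Pp l) ` S t L (h + l) (2 \<le> l))"
  (is "?A = ?B")
proof
  show "?A \<subseteq> ?B"
  proof
    fix w assume w: "w \<in> ?A"
    then have r: "rwalk t h g w = Some (0, False)" "length w \<le> Suc L" by (auto simp: S_def)
    show "w \<in> ?B"
    proof (cases w)
      case Nil then show ?thesis using r by auto
    next
      case (Cons a r')
      show ?thesis
      proof (cases a)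
        case Psh then show ?thesis using r Cons by (auto simp: S_def split: if_splits)
      next
        case (Pp l)
        then have c: "1 \<le> l" "enat l \<le> t" "rwalk t (h + l) (2 \<le> l) r' = Some (0, False)"
          using r Cons by (auto split: if_splits)
        have "h + l + sumpp r' = npsh r'" using rwalk_count[OF c(3)] by simp
        moreover have "npsh r' \<le> length r'" unfolding npsh_def by simp
        ultimately have "l \<le> L" using r Cons by simp
        then show ?thesis using c Cons Pp r by (auto simp: S_def)
      qed
    qed
  qed
next
  show "?B \<subseteq> ?A" by (auto simp: S_def split: if_splits)
qed

lemma W_Suc:
  assumes "0 \<le> x"
  shows "W t x (Suc L) h g =
   (if h = 0 \<and> \<not> g then 1 else 0) +
   (if \<not> g \<and> 0 < h then x * W t x L (h - 1) False else 0) +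
   (\<Sum>l\<in>{l. 1 \<le> l \<and> l \<le> L \<and> enat l \<le> t}. W t x L (h + l) (2 \<le> l))"
proof -
  let ?B1 = "(if h = 0 \<and> \<not> g then {[]} else {}) :: mv list set"
  let ?B2 = "if \<not> g \<and> 0 < h then Cons Psh ` S t L (h - 1) False else {}"
  let ?I = "{l. 1 \<le> l \<and> l \<le> L \<and> enat l \<le> t}"
  let ?B3 = "\<Union>l\<in>?I. Cons (Pp l) ` S t L (h + l) (2 \<le> l)"
  have fI: "finite ?I" by (rule finite_subset[of _ "{..L}"]) auto
  have f1: "finite ?B1" by simp
  have f2: "finite ?B2" using finite_S by simp
  have f3: "finite ?B3" using fI finite_S by auto
  have s1: "(\<Sum>w\<in>?B1. x ^ npsh w) = (if h = 0 \<and> \<not> g then 1 else 0)" by simp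
  have s2: "(\<Sum>w\<in>?B2. x ^ npsh w) = (if \<not> g \<and> 0 < h then x * W t x L (h - 1) False else 0)"
    by (simp add: W_def sum.reindex sum_distrib_left)
  have s3: "(\<Sum>w\<in>?B3. x ^ npsh w) = (\<Sum>l\<in>?I. W t x L (h + l) (2 \<le> l))"
    by (subst sum.UNION_disjoint) (auto simp: fI finite_S W_def sum.reindex)
  have "W t x (Suc L) h g = (\<Sum>w\<in>?B1 \<union> ?B2 \<union> ?B3. x ^ npsh w)"
    unfolding W_def S_Suc by simp
  also have "\<dots> = (\<Sum>w\<in>?B1 \<union> ?B2. x ^ npsh w) + (\<Sum>w\<in>?B3. x ^ npsh w)"
    by (rule sum.union_disjoint) (use f1 f2 f3 in auto)
  also have "(\<Sum>w\<in>?B1 \<union> ?B2. x ^ npsh w) = (\<Sum>w\<in>?B1. x ^ npsh w) + (\<Sum>w\<in>?B2. x ^ npsh w)"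
    by (rule sum.union_disjoint) (use f1 f2 in auto)
  finally show ?thesis using s1 s2 s3 by simp
qed

lemma lyapunov:
  assumes x: "0 \<le> x"
    and V: "\<And>L h g. (if h = 0 \<and> \<not> g then 1 else 0) +
   (if \<not> g \<and> 0 < h then x * V (h - 1) False else 0) +
   (\<Sum>l\<in>{l. 1 \<le> l \<and> l \<le> L \<and> enat l \<le> t}. V (h + l) (2 \<le> l)) \<le> (V h g :: real)"
    and Vn: "\<And>h g. 0 \<le> V h g"
  shows "W t x L h g \<le> V h g"
proof (induction L arbitrary: h g)
  case 0
  have "W t x 0 h g = (if h = 0 \<and> \<not> g then 1 else 0)" by (simp add: W_def S_0)
  also have "\<dots> \<le> V h g"
  proof -
    have e: "{l::nat. 1 \<le> l \<and> l \<le> 0 \<and> enat l \<le> t} = {}" by auto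
    have "(if h = 0 \<and> \<not> g then 1 else 0) + (if \<not> g \<and> 0 < h then x * V (h - 1) False else 0) \<le> V h g"
      using V[of h g 0] unfolding e by simp
    moreover have "0 \<le> (if \<not> g \<and> 0 < h then x * V (h - 1) False else 0)" using Vn x by simp
    ultimately show ?thesis by linarith
  qed
  finally show ?case .
next
  case (Suc L)
  have "W t x (Suc L) h g \<le> (if h = 0 \<and> \<not> g then 1 else 0) +
   (if \<not> g \<and> 0 < h then x * V (h - 1) False else 0) +
   (\<Sum>l\<in>{l. 1 \<le> l \<and> l \<le> L \<and> enat l \<le> t}. V (h + l) (2 \<le> l))"
    unfolding W_Suc[OF x]
    by (intro add_mono sum_mono order.refl) (auto intro: mult_left_mono Suc.IH x)
  also have "\<dots> \<le> V h g" by (rule V)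
  finally show ?case .
qed

lemma Rset_S: "Rset t n \<subseteq> S t (2 * n) 0 False"
  using Rset_sub by (auto simp: Rset_def S_def)

lemma card_bound:
  assumes x: "0 \<le> x" and "W t x (2 * n) 0 False \<le> B"
  shows "real (card (Rset t n)) * x ^ n \<le> B"
proof -
  have "real (card (Rset t n)) * x ^ n = (\<Sum>w\<in>Rset t n. x ^ npsh w)"
    by (simp add: Rset_def)
  also have "\<dots> \<le> W t x (2 * n) 0 False" unfolding W_def
    by (rule sum_mono2[OF finite_S Rset_S]) (use x in auto)
  finally show ?thesis using assms by simp
qed



lemma geo5:
  "(\<Sum>l\<in>{1..L}. (if 2 \<le> l then 4/5 else 2) * (1/3::real) ^ (h + l)) =
     (if L = 0 then 0 else (1/3) ^ h * (4/5 - (2/15) * (1/3) ^ (L - 1)))"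
proof (induction L)
  case 0 then show ?case by simp
next
  case (Suc L)
  show ?case
  proof (cases L)
    case 0 then show ?thesis by simp
  next
    case (Suc k)
    have "(\<Sum>l\<in>{1..Suc L}. (if 2 \<le> l then 4/5 else 2) * (1/3::real) ^ (h + l)) =
      (\<Sum>l\<in>{1..L}. (if 2 \<le> l then 4/5 else 2) * (1/3::real) ^ (h + l)) + 4/5 * (1/3) ^ (h + Suc L)"
      using Suc by simp
    also have "\<dots> = (1/3) ^ h * (4/5 - (2/15) * (1/3) ^ k) + 4/5 * (1/3) ^ (h + Suc (Suc k))"
      using Suc.IH Suc by simp
    also have "\<dots> = (1/3) ^ h * (4/5 - (2/15) * (1/3) ^ (Suc L - 1))"
      using Suc by (simp add: power_add field_simps)
    finally show ?thesis by simp
  qed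
qed

definition V5 :: "nat \<Rightarrow> bool \<Rightarrow> real" where
  "V5 h g = (if g then 4/5 else 2) * (1/3) ^ h"

lemma V5_ok:
  "(if h = 0 \<and> \<not> g then 1 else 0) +
   (if \<not> g \<and> 0 < h then 1/5 * V5 (h - 1) False else 0) +
   (\<Sum>l\<in>{l. 1 \<le> l \<and> l \<le> L \<and> enat l \<le> t}. V5 (h + l) (2 \<le> l)) \<le> V5 h g"
proof -
  have "(\<Sum>l\<in>{l. 1 \<le> l \<and> l \<le> L \<and> enat l \<le> t}. V5 (h + l) (2 \<le> l)) \<le> (\<Sum>l\<in>{1..L}. V5 (h + l) (2 \<le> l))"
    by (rule sum_mono2) (auto simp: V5_def)
  also have "\<dots> = (\<Sum>l\<in>{1..L}. (if 2 \<le> l then 4/5 else 2) * (1/3::real) ^ (h + l))"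
    by (simp add: V5_def)
  also have "\<dots> \<le> 4/5 * (1/3) ^ h" unfolding geo5 by (auto simp: field_simps)
  finally have s: "(\<Sum>l\<in>{l. 1 \<le> l \<and> l \<le> L \<and> enat l \<le> t}. V5 (h + l) (2 \<le> l)) \<le> 4/5 * (1/3) ^ h" .
  show ?thesis
  proof (cases g)
    case True then show ?thesis using s by (simp add: V5_def)
  next
    case False
    show ?thesis
    proof (cases h)
      case 0 then show ?thesis using s False by (simp add: V5_def)
    next
      case (Suc k)
      have "1/5 * V5 (h - 1) False = 6/5 * (1/3) ^ h" using Suc by (simp add: V5_def)
      then show ?thesis using s False Suc by (simp add: V5_def)
    qed
  qed
qed

lemma bound5: "real (card (Rset t n)) * (1/5) ^ n \<le> 2"
proof -
  have "W t (1/5) (2 * n) 0 False \<le> V5 0 False"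
    by (rule lyapunov) (use V5_ok in \<open>auto simp: V5_def\<close>)
  then show ?thesis by (intro card_bound) (auto simp: V5_def)
qed

definition V4 :: "nat \<Rightarrow> bool \<Rightarrow> real" where
  "V4 h g = 2 * (1/2) ^ (if g then Suc h else h)"

lemma V4_ok:
  "(if h = 0 \<and> \<not> g then 1 else 0) +
   (if \<not> g \<and> 0 < h then 1/4 * V4 (h - 1) False else 0) +
   (\<Sum>l\<in>{l. 1 \<le> l \<and> l \<le> L \<and> enat l \<le> 1}. V4 (h + l) (2 \<le> l)) \<le> V4 h g"
proof -
  have I: "{l. 1 \<le> l \<and> l \<le> L \<and> enat l \<le> 1} = (if 1 \<le> L then {1} else {})"
    by (auto simp: one_enat_def)
  have s: "(\<Sum>l\<in>{l. 1 \<le> l \<and> l \<le> L \<and> enat l \<le> 1}. V4 (h + l) (2 \<le> l)) \<le> 2 * (1/2) ^ Suc h"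
    unfolding I by (auto simp: V4_def)
  show ?thesis
  proof (cases g)
    case True then show ?thesis using s by (simp add: V4_def)
  next
    case False
    show ?thesis
    proof (cases h)
      case 0 then show ?thesis using s False by (simp add: V4_def)
    next
      case (Suc k)
      have "1/4 * V4 (h - 1) False = (1/2) ^ h" using Suc by (simp add: V4_def)
      then show ?thesis using s False Suc by (simp add: V4_def)
    qed
  qed
qed

lemma bound4: "real (card (Rset 1 n)) * (1/4) ^ n \<le> 2"
proof -
  have "W 1 (1/4) (2 * n) 0 False \<le> V4 0 False"
    by (rule lyapunov) (use V4_ok in \<open>auto simp: V4_def\<close>)
  then show ?thesis by (intro card_bound) (auto simp: V4_def)
qed



lemma rwalk_shift: "rwalk t h g w = Some (h', g') \<Longrightarrow> rwalk t (h + k) g w = Some (h' + k, g')"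
  by (induction t h g w arbitrary: h' g' rule: rwalk.induct) (auto split: if_splits simp: ac_simps)

lemma rwalk_dead: "rwalk t 0 False e = Some (0, False) \<Longrightarrow> rwalk t 0 False (e @ Psh # q) = None"
  by (simp add: rwalk_append)

lemma D1:
  assumes x: "0 \<le> x"
  shows "x * W t x L1 0 False * W t x L2 h False \<le> W t x (L1 + L2 + 1) (Suc h) False"
proof -
  let ?A = "S t L1 0 False" and ?B = "S t L2 h False"
  define f where "f = (\<lambda>(e, p). e @ Psh # p)"
  have inj: "inj_on f (?A \<times> ?B)"
  proof (rule inj_onI)
    fix a b assume a: "a \<in> ?A \<times> ?B" and b: "b \<in> ?A \<times> ?B" and eq: "f a = f b"
    obtain e1 p1 where a': "a = (e1, p1)" by (cases a)
    obtain e2 p2 where b': "b = (e2, p2)" by (cases b)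
    have r1: "rwalk t 0 False e1 = Some (0, False)" and r2: "rwalk t 0 False e2 = Some (0, False)"
      using a b a' b' by (auto simp: S_def)
    have eq': "e1 @ Psh # p1 = e2 @ Psh # p2" using eq a' b' by (simp add: f_def)
    then obtain us where us: "(e1 = e2 @ us \<and> us @ Psh # p1 = Psh # p2) \<or> (e1 @ us = e2 \<and> Psh # p1 = us @ Psh # p2)"
      by (auto simp: append_eq_append_conv2)
    show "a = b"
    proof (cases us)
      case Nil then show ?thesis using us a' b' by auto
    next
      case (Cons u us')
      from us show ?thesis
      proof
        assume h: "e1 = e2 @ us \<and> us @ Psh # p1 = Psh # p2"
        then have "e1 = e2 @ Psh # us'" using Cons by auto
        then have False using rwalk_dead[OF r2] r1 by (metis option.distinct(1) append.assoc append_Cons)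
        then show ?thesis ..
      next
        assume h: "e1 @ us = e2 \<and> Psh # p1 = us @ Psh # p2"
        then have "e2 = e1 @ Psh # us'" using Cons by auto
        then have False using rwalk_dead[OF r1] r2 by (metis option.distinct(1) append.assoc append_Cons)
        then show ?thesis ..
      qed
    qed
  qed
  have sub: "f ` (?A \<times> ?B) \<subseteq> S t (L1 + L2 + 1) (Suc h) False"
  proof
    fix w assume "w \<in> f ` (?A \<times> ?B)"
    then obtain e p where ep: "e \<in> ?A" "p \<in> ?B" "w = e @ Psh # p" by (auto simp: f_def)
    have re: "rwalk t (Suc h) False e = Some (Suc h, False)"
      using rwalk_shift[of t 0 False e 0 False "Suc h"] ep(1) by (auto simp: S_def)
    show "w \<in> S t (L1 + L2 + 1) (Suc h) False"
      using ep re by (auto simp: S_def rwalk_append)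
  qed
  have "x * W t x L1 0 False * W t x L2 h False = (\<Sum>e\<in>?A. x * x ^ npsh e) * (\<Sum>p\<in>?B. x ^ npsh p)"
    by (simp add: W_def sum_distrib_left)
  also have "\<dots> = (\<Sum>e\<in>?A. \<Sum>p\<in>?B. (x * x ^ npsh e) * x ^ npsh p)" by (rule sum_product)
  also have "\<dots> = (\<Sum>(e, p)\<in>?A \<times> ?B. x ^ npsh (f (e, p)))"
    by (simp add: sum.cartesian_product f_def power_add mult.assoc)
  also have "\<dots> = (\<Sum>w\<in>f ` (?A \<times> ?B). x ^ npsh w)"
    by (subst sum.reindex[OF inj]) (simp add: case_prod_beta)
  also have "\<dots> \<le> W t x (L1 + L2 + 1) (Suc h) False"
    unfolding W_def by (rule sum_mono2[OF finite_S sub]) (use x in auto)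
  finally show ?thesis .
qed

definition C :: "enat \<Rightarrow> nat \<Rightarrow> nat list set" where
  "C t m = {c. sum_list c = m \<and> (\<forall>a\<in>set c. 1 \<le> a \<and> enat a \<le> t)}"

lemma C_sub: "C t m \<subseteq> {c. set c \<subseteq> {..m} \<and> length c \<le> m}"
proof
  fix c assume "c \<in> C t m"
  then have c: "sum_list c = m" "\<forall>a\<in>set c. 1 \<le> a" by (auto simp: C_def)
  have "length c \<le> sum_list c" using c(2)
    by (induction c) auto
  moreover have "set c \<subseteq> {..m}" using c(1) member_le_sum_list by fastforce
  ultimately show "c \<in> {c. set c \<subseteq> {..m} \<and> length c \<le> m}" using c by auto
qed

lemma finite_C: "finite (C t m)"
  by (rule finite_subset[OF C_sub]) (rule finite_lists_length_le, auto)

lemma C_len: "c \<in> C t m \<Longrightarrow> length c \<le> m"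
  using C_sub by auto

lemma rwalk_map_Pp:
  "(\<forall>a\<in>set c. 1 \<le> a \<and> enat a \<le> t) \<Longrightarrow> \<exists>g'. rwalk t h g (map Pp c) = Some (h + sum_list c, g')"
proof (induction c arbitrary: h g)
  case Nil then show ?case by simp
next
  case (Cons a c)
  have "\<forall>a\<in>set c. 1 \<le> a \<and> enat a \<le> t" using Cons.prems by simp
  then obtain g' where "rwalk t (h + a) (2 \<le> a) (map Pp c) = Some (h + a + sum_list c, g')"
    using Cons.IH by blast
  then show ?case using Cons.prems by (simp add: add.assoc)
qed

lemma npsh_map_Pp [simp]: "npsh (map Pp c) = 0"
  by (induction c) auto

lemma takeWhile_run: "takeWhile (\<lambda>a. a \<noteq> Psh) (map Pp c @ Pp 1 # Psh # p) = map Pp c @ [Pp 1]"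
  by (induction c) auto

lemma D2:
  assumes x: "0 \<le> x" and t1: "enat 1 \<le> t" and L: "M + 2 + L' \<le> L"
  shows "1 + (\<Sum>m\<le>M. real (card (C t m)) * x * W t x L' m False) \<le> W t x L 0 False"
proof -
  let ?D = "SIGMA m:{..M}. C t m \<times> S t L' m False"
  define f where "f = (\<lambda>(m::nat, c, p). map Pp c @ Pp 1 # Psh # p)"
  have fD: "finite ?D" using finite_C finite_S by (auto intro!: finite_SigmaI)
  have inj: "inj_on f ?D"
  proof (rule inj_onI)
    fix a b assume a: "a \<in> ?D" and b: "b \<in> ?D" and eq: "f a = f b"
    obtain m1 c1 p1 where a': "a = (m1, c1, p1)" by (cases a) auto
    obtain m2 c2 p2 where b': "b = (m2, c2, p2)" by (cases b) auto
    have eq': "map Pp c1 @ Pp 1 # Psh # p1 = map Pp c2 @ Pp 1 # Psh # p2" using eq a' b' by (simp add: f_def)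
    then have "map Pp c1 @ [Pp 1] = map Pp c2 @ [Pp 1]" using takeWhile_run by metis
    then have "map Pp c1 = map Pp c2" by simp
    moreover have "inj Pp" by (simp add: inj_def)
    ultimately have cc: "c1 = c2" by (simp add: inj_map_eq_map)
    then have "p1 = p2" using eq' by simp
    moreover have "m1 = m2" using a b a' b' cc by (auto simp: C_def)
    ultimately show "a = b" using a' b' cc by simp
  qed
  have sub: "f ` ?D \<subseteq> S t L 0 False - {[]}"
  proof
    fix w assume "w \<in> f ` ?D"
    then obtain m c p where mcp: "m \<le> M" "c \<in> C t m" "p \<in> S t L' m False" "w = map Pp c @ Pp 1 # Psh # p"
      by (auto simp: f_def)
    from rwalk_map_Pp[of c t 0 False] mcp(2) obtain g' where
      r1: "rwalk t 0 False (map Pp c) = Some (m, g')" by (auto simp: C_def)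
    have r2: "rwalk t m False p = Some (0, False)" "length p \<le> L'" using mcp(3) by (auto simp: S_def)
    have "length c \<le> m" using C_len mcp(2) .
    then have "length w \<le> L" using mcp L r2 by simp
    moreover have "rwalk t 0 False w = Some (0, False)" using r1 r2 t1 mcp(4) by (simp add: rwalk_append)
    ultimately show "w \<in> S t L 0 False - {[]}" using mcp(4) by (auto simp: S_def)
  qed
  have e0: "[] \<in> S t L 0 False" by (simp add: S_def)
  have "(\<Sum>m\<le>M. real (card (C t m)) * x * W t x L' m False) =
     (\<Sum>m\<le>M. \<Sum>c\<in>C t m. \<Sum>p\<in>S t L' m False. x * x ^ npsh p)"
    by (simp add: W_def sum_distrib_left mult.assoc)
  also have "\<dots> = (\<Sum>m\<le>M. \<Sum>(c, p)\<in>C t m \<times> S t L' m False. x * x ^ npsh p)"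
    by (rule sum.cong[OF refl], rule sum.cartesian_product)
  also have "\<dots> = (\<Sum>(m, cp)\<in>?D. x * x ^ npsh (snd cp))"
    by (subst sum.Sigma) (auto simp: finite_C finite_S case_prod_beta)
  also have "\<dots> = (\<Sum>(m, c, p)\<in>?D. x ^ npsh (f (m, c, p)))"
    by (rule sum.cong) (auto simp: f_def)
  also have "\<dots> = (\<Sum>w\<in>f ` ?D. x ^ npsh w)"
    by (subst sum.reindex[OF inj]) (simp add: case_prod_beta)
  also have "\<dots> \<le> (\<Sum>w\<in>S t L 0 False - {[]}. x ^ npsh w)"
    by (rule sum_mono2[OF _ sub]) (use x finite_S in auto)
  finally have "1 + (\<Sum>m\<le>M. real (card (C t m)) * x * W t x L' m False) \<le> 1 + (\<Sum>w\<in>S t L 0 False - {[]}. x ^ npsh w)"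
    by simp
  also have "\<dots> = W t x L 0 False"
    unfolding W_def using sum.remove[OF finite_S e0, of "\<lambda>w. x ^ npsh w"] by simp
  finally show ?thesis .
qed



lemma powE:
  assumes x: "0 \<le> x"
  shows "x ^ h * W t x L 0 False ^ (h + 1) \<le> W t x ((h + 1) * (L + 1)) h False"
proof (induction h)
  case 0 then show ?case using W_mono[OF x, of L "L + 1"] by simp
next
  case (Suc h)
  let ?E = "W t x L 0 False"
  have E0: "0 \<le> ?E" using W_nonneg[OF x] .
  have "x ^ Suc h * ?E ^ (Suc h + 1) = (x * ?E) * (x ^ h * ?E ^ (h + 1))" by (simp add: algebra_simps)
  also have "\<dots> \<le> (x * ?E) * W t x ((h + 1) * (L + 1)) h False"
    by (rule mult_left_mono[OF Suc.IH]) (use x E0 in simp)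
  also have "\<dots> \<le> W t x (L + (h + 1) * (L + 1) + 1) (Suc h) False" by (rule D1[OF x])
  also have "L + (h + 1) * (L + 1) + 1 = (Suc h + 1) * (L + 1)" by simp
  finally show ?case .
qed

lemma key_ineq:
  assumes x: "0 \<le> x" and t1: "enat 1 \<le> t"
  shows "1 + (\<Sum>m\<le>M. real (card (C t m)) * (x * W t x L 0 False) ^ (m + 1))
     \<le> W t x (M + 2 + (M + 1) * (L + 1)) 0 False"
proof -
  let ?E = "W t x L 0 False"
  have "(\<Sum>m\<le>M. real (card (C t m)) * (x * ?E) ^ (m + 1))
     \<le> (\<Sum>m\<le>M. real (card (C t m)) * x * W t x ((M + 1) * (L + 1)) m False)"
  proof (rule sum_mono)
    fix m assume m: "m \<in> {..M}"
    have "(x * ?E) ^ (m + 1) = x * (x ^ m * ?E ^ (m + 1))" by (simp add: power_mult_distrib)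
    also have "\<dots> \<le> x * W t x ((m + 1) * (L + 1)) m False" by (rule mult_left_mono[OF powE[OF x] x])
    also have "\<dots> \<le> x * W t x ((M + 1) * (L + 1)) m False"
    proof -
      have "(m + 1) * (L + 1) \<le> (M + 1) * (L + 1)" using m by (intro mult_le_mono) auto
      then show ?thesis by (rule mult_left_mono[OF W_mono[OF x] x])
    qed
    finally show "real (card (C t m)) * (x * ?E) ^ (m + 1) \<le> real (card (C t m)) * x * W t x ((M + 1) * (L + 1)) m False"
      by (simp add: mult.assoc mult_left_mono)
  qed
  moreover have "1 + (\<Sum>m\<le>M. real (card (C t m)) * x * W t x ((M + 1) * (L + 1)) m False)
     \<le> W t x (M + 2 + (M + 1) * (L + 1)) 0 False"
    by (rule D2[OF x t1]) simp
  ultimately show ?thesis by linarith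
qed

lemma E_bound:
  assumes x: "0 \<le> x"
  shows "W t x L 0 False \<le> (\<Sum>n\<le>L. real (card (Rset t n)) * x ^ n)"
proof -
  let ?S = "S t L 0 False"
  have "W t x L 0 False = (\<Sum>n\<in>npsh ` ?S. \<Sum>w\<in>{w \<in> ?S. npsh w = n}. x ^ npsh w)"
    unfolding W_def by (rule sum.image_gen[OF finite_S])
  also have "\<dots> = (\<Sum>n\<in>npsh ` ?S. real (card {w \<in> ?S. npsh w = n}) * x ^ n)"
    by (rule sum.cong) auto
  also have "\<dots> \<le> (\<Sum>n\<in>npsh ` ?S. real (card (Rset t n)) * x ^ n)"
  proof (rule sum_mono)
    fix n assume "n \<in> npsh ` ?S"
    have "{w \<in> ?S. npsh w = n} \<subseteq> Rset t n" by (auto simp: S_def Rset_def)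
    then have "card {w \<in> ?S. npsh w = n} \<le> card (Rset t n)" by (rule card_mono[OF finite_Rset])
    then show "real (card {w \<in> ?S. npsh w = n}) * x ^ n \<le> real (card (Rset t n)) * x ^ n"
      by (intro mult_right_mono) (use x in auto)
  qed
  also have "\<dots> \<le> (\<Sum>n\<le>L. real (card (Rset t n)) * x ^ n)"
  proof (rule sum_mono2)
    show "npsh ` ?S \<subseteq> {..L}"
    proof
      fix n assume "n \<in> npsh ` ?S"
      then obtain w where "w \<in> ?S" "n = npsh w" by auto
      then show "n \<in> {..L}" unfolding npsh_def S_def
        by (auto intro: le_trans[OF length_filter_le])
    qed
  qed (use x in auto)
  finally show ?thesis .
qed

lemma limit_ineq:
  assumes x: "0 \<le> x" and t1: "enat 1 \<le> t"
    and sm: "summable (\<lambda>n. real (card (Rset t n)) * x ^ n)"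
  shows "\<exists>E\<ge>1. \<forall>M. 1 + (\<Sum>m\<le>M. real (card (C t m)) * (x * E) ^ (m + 1)) \<le> E"
proof -
  define e where "e L = W t x L 0 False" for L
  have inc: "incseq e" unfolding e_def by (intro incseq_SucI W_mono[OF x]) simp
  have bd: "\<forall>L. e L \<le> suminf (\<lambda>n. real (card (Rset t n)) * x ^ n)"
  proof
    fix L
    have "e L \<le> (\<Sum>n\<le>L. real (card (Rset t n)) * x ^ n)" unfolding e_def by (rule E_bound[OF x])
    also have "\<dots> \<le> suminf (\<lambda>n. real (card (Rset t n)) * x ^ n)"
      unfolding atMost_atLeast0 atLeastLessThanSuc_atLeastAtMost[symmetric] atLeast0LessThan
      by (rule sum_le_suminf[OF sm]) (use x in auto)
    finally show "e L \<le> suminf (\<lambda>n. real (card (Rset t n)) * x ^ n)" .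
  qed
  obtain E where lim: "e \<longlonglongrightarrow> E" and le: "\<forall>i. e i \<le> E" using incseq_convergent[OF inc bd] by blast
  have e0: "e 0 = 1" unfolding e_def W_def by (simp add: S_0)
  have "E \<ge> 1" using le e0 by metis
  moreover have "1 + (\<Sum>m\<le>M. real (card (C t m)) * (x * E) ^ (m + 1)) \<le> E" for M
  proof -
    let ?f = "\<lambda>L. 1 + (\<Sum>m\<le>M. real (card (C t m)) * (x * e L) ^ (m + 1))"
    have "?f \<longlonglongrightarrow> 1 + (\<Sum>m\<le>M. real (card (C t m)) * (x * E) ^ (m + 1))"
      by (intro tendsto_intros lim)
    moreover have "\<forall>L. ?f L \<le> E"
    proof
      fix L
      have "?f L \<le> e (M + 2 + (M + 1) * (L + 1))" unfolding e_def by (rule key_ineq[OF x t1])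
      also have "\<dots> \<le> E" using le by blast
      finally show "?f L \<le> E" .
    qed
    ultimately show ?thesis by (intro LIMSEQ_le_const2) auto
  qed
  ultimately show ?thesis by blast
qed



lemma A1:
  fixes x E :: real
  assumes x: "0 < x" and E: "1 \<le> E" and H: "\<And>M. 1 + (\<Sum>m\<le>M. (x * E) ^ (m + 1)) \<le> E"
  shows "x \<le> 1/4"
proof -
  define y where "y = x * E"
  have y0: "0 < y" using x E by (simp add: y_def)
  show ?thesis
  proof (cases "1 \<le> y")
    case True
    have "real (M + 1) \<le> E" for M
    proof -
      have "real (M + 1) = (\<Sum>m\<le>M. (1::real))" by simp
      also have "\<dots> \<le> (\<Sum>m\<le>M. y ^ (m + 1))" by (intro sum_mono one_le_power True)
      finally show ?thesis using H[of M] unfolding y_def by linarith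
    qed
    from this[of "nat \<lceil>E\<rceil>"] have False by linarith
    then show ?thesis ..
  next
    case False
    then have y1: "y < 1" by simp
    have b: "x * (1 - y ^ (M + 2)) \<le> 1/4" for M
    proof -
      have "(\<Sum>m\<le>M. y ^ (m + 1)) = y * (\<Sum>m<Suc M. y ^ m)"
        by (simp add: sum_distrib_left lessThan_Suc_atMost)
      also have "\<dots> = y * ((1 - y ^ Suc M) / (1 - y))" unfolding sum_gp_strict using y1 by simp
      finally have s: "(\<Sum>m\<le>M. y ^ (m + 1)) = y * ((1 - y ^ Suc M) / (1 - y))" .
      have "1 + y * ((1 - y ^ Suc M) / (1 - y)) \<le> E" using H[of M] s unfolding y_def by simp
      then have "(1 - y) + y * (1 - y ^ Suc M) \<le> E * (1 - y)" using y1
        by (simp add: field_simps)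
      then have "1 - y ^ (M + 2) \<le> E * (1 - y)" by (simp add: algebra_simps)
      then have "x * (1 - y ^ (M + 2)) \<le> x * (E * (1 - y))" using x by (simp add: mult_left_mono)
      also have "\<dots> = y * (1 - y)" by (simp add: y_def)
      also have "\<dots> \<le> 1/4"
      proof -
        have "0 \<le> (y - 1/2)^2" by simp
        moreover have "(y - 1/2)^2 = 1/4 - y * (1 - y)" by (simp add: power2_eq_square algebra_simps)
        ultimately show ?thesis by linarith
      qed
      finally show ?thesis .
    qed
    have "(\<lambda>M. x * (1 - y ^ (M + 2))) \<longlonglongrightarrow> x * (1 - 0)"
      by (intro tendsto_intros LIMSEQ_power_zero[THEN LIMSEQ_ignore_initial_segment[where k=2]])
        (use y0 y1 in auto)
    then show ?thesis using b by (intro LIMSEQ_le_const2) auto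
  qed
qed

lemma q_small: "22 \<le> t \<Longrightarrow> (9/10::real) ^ t \<le> 1/10"
proof -
  assume t: "22 \<le> t"
  have "(9/10::real) ^ t \<le> (9/10) ^ 22" by (rule power_decreasing[OF t]) auto
  also have "\<dots> \<le> 1/10" by (simp add: power_divide)
  finally show ?thesis .
qed

lemma A2:
  fixes x E :: real and t :: nat
  assumes t: "22 \<le> t" and x: "0 < x" and E: "0 < E"
    and H: "1 + x * E + (x * E)^2 * (\<Sum>k<t. (2 * (x * E)) ^ k) \<le> E"
  shows "x \<le> 1/5 + (9/10) ^ t"
proof -
  define y where "y = x * E"
  define q :: real where "q = (9/10) ^ t"
  define G where "G = (\<Sum>k<t. (2 * y) ^ k)"
  have y0: "0 < y" using x E by (simp add: y_def)
  have q0: "0 \<le> q" and q1: "q \<le> 1/10" using q_small[OF t] by (auto simp: q_def)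
  have G0: "0 \<le> G" unfolding G_def using y0 by (auto intro: sum_nonneg)
  have H': "1 + y + y^2 * G \<le> E" using H by (simp add: y_def G_def)
  have xe: "x = y / E" using E by (simp add: y_def)
  show ?thesis
  proof (cases "y \<le> 1/5")
    case True
    have "0 \<le> y^2 * G" using G0 by simp
    then have "1 \<le> E" using H' y0 by linarith
    then have "y / E \<le> y" using y0 by (simp add: divide_le_eq)
    then show ?thesis using xe True q0 unfolding q_def by linarith
  next
    case False
    then have y15: "1/5 < y" by simp
    show ?thesis
    proof (cases "9/20 \<le> y")
      case True
      have "(\<Sum>k<t. (9/10::real) ^ k) \<le> G" unfolding G_def
        by (intro sum_mono power_mono) (use True in auto)
      moreover have "(\<Sum>k<t. (9/10::real) ^ k) = 10 * (1 - q)" by (simp add: sum_gp_strict q_def)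
      moreover have "10 * (1 - q) = 10 - 10 * q" by simp
      ultimately have "9 \<le> G" using q1 by linarith
      then have "9 * y^2 \<le> y^2 * G" by (simp add: mult_right_mono mult.commute)
      then have "1 + y + 9 * y^2 \<le> E" using H' by linarith
      moreover have "5 * y \<le> 1 + y + 9 * y^2"
      proof -
        have "0 \<le> (3 * y - 2/3)^2" by simp
        moreover have "(3 * y - 2/3)^2 = 9 * y^2 - 4 * y + 4/9" by (simp add: power2_eq_square algebra_simps)
        ultimately show ?thesis by linarith
      qed
      ultimately have "5 * y \<le> E" by linarith
      then have "y / E \<le> 1/5" using E by (simp add: divide_le_eq)
      then show ?thesis using xe q0 unfolding q_def by linarith
    next
      case False
      then have y920: "y < 9/20" by simp
      define d where "d = 1 - 2 * y"
      have d0: "1/10 < d" using y920 by (simp add: d_def)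
      have ne: "2 * y \<noteq> 1" using y920 by simp
      have "G = (1 - (2 * y) ^ t) / (1 - 2 * y)" unfolding G_def sum_gp_strict using ne by simp
      then have "d * G = 1 - (2 * y) ^ t" using d0 by (simp add: d_def)
      moreover have "(2 * y) ^ t \<le> q" unfolding q_def by (intro power_mono) (use y0 y920 in auto)
      ultimately have dG: "1 - q \<le> d * G" by linarith
      have "y^2 * (1 - q) \<le> y^2 * (d * G)" using dG by (simp add: mult_left_mono)
      then have Ed: "1 - y - y^2 - y^2 * q \<le> E * d"
      proof -
        assume a: "y^2 * (1 - q) \<le> y^2 * (d * G)"
        have "E * d \<ge> (1 + y + y^2 * G) * d" using H' d0 by (simp add: mult_right_mono)
        also have "(1 + y + y^2 * G) * d = (1 + y) * (1 - 2 * y) + y^2 * (d * G)" by (simp add: d_def algebra_simps)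
        finally have "(1 + y) * (1 - 2 * y) + y^2 * (1 - q) \<le> E * d" using a by linarith
        then show ?thesis by (simp add: algebra_simps power2_eq_square)
      qed
      have "y^2 \<le> (9/20)^2" using y0 y920 by (intro power_mono) auto
      then have yy: "y^2 \<le> 81/400" by (simp add: power2_eq_square)
      have yyq: "y^2 * q \<le> 81/4000" using mult_mono[OF yy q1] q0 by simp
      have P1': "5 * (y * d) \<le> 1 - y - y^2"
      proof -
        have "0 \<le> (1 - 3 * y)^2" by simp
        moreover have "(1 - 3 * y)^2 = 1 - y - y^2 - 5 * (y * d)" by (simp add: d_def power2_eq_square algebra_simps)
        ultimately show ?thesis by linarith
      qed
      then have P1: "y * d \<le> (1 - y - y^2) / 5" by simp
      have P2: "0 \<le> 1 - y - (6/5) * y^2 - y^2 * q" using yy yyq y920 by linarith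
      have "y * d \<le> (1/5 + q) * (1 - y - y^2 - y^2 * q)"
      proof -
        have "(1/5 + q) * (1 - y - y^2 - y^2 * q) = (1 - y - y^2) / 5 + q * (1 - y - (6/5) * y^2 - y^2 * q)"
          by (simp add: field_simps power2_eq_square)
        moreover have "0 \<le> q * (1 - y - (6/5) * y^2 - y^2 * q)" using q0 P2 by simp
        ultimately show ?thesis using P1 by linarith
      qed
      also have "\<dots> \<le> (1/5 + q) * (E * d)" using Ed q0 by (intro mult_left_mono) auto
      finally have "y * d \<le> ((1/5 + q) * E) * d" by (simp add: mult.assoc)
      then have "y \<le> (1/5 + q) * E" using d0 by (simp add: mult_le_cancel_right)
      then have "y / E \<le> 1/5 + q" using E by (simp add: divide_le_eq)
      then show ?thesis using xe by (simp add: q_def)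
    qed
  qed
qed



fun comp :: "bool list \<Rightarrow> nat list" where
  "comp [] = [1]"
| "comp (True # bs) = 1 # comp bs"
| "comp (False # bs) = (case comp bs of [] \<Rightarrow> [] | a # r \<Rightarrow> Suc a # r)"

lemma comp_props: "\<exists>a r. comp bs = a # r \<and> 1 \<le> a \<and> sum_list (comp bs) = Suc (length bs) \<and> (\<forall>b\<in>set (comp bs). 1 \<le> b)"
  by (induction bs rule: comp.induct) auto

lemma comp_inj: "comp b1 = comp b2 \<Longrightarrow> b1 = b2"
proof (induction b1 arbitrary: b2 rule: comp.induct)
  case 1
  then show ?case using comp_props[of b2] by (cases b2 rule: comp.cases) (auto split: list.splits)
next
  case (2 bs)
  show ?case
  proof (cases b2 rule: comp.cases)
    case 1 then show ?thesis using 2 comp_props[of bs] by auto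
  next
    case (2 bs') then show ?thesis using "2.IH" "2.prems" by simp
  next
    case (3 bs')
    then show ?thesis using "2.prems" comp_props[of bs'] by (auto split: list.splits)
  qed
next
  case (3 bs)
  obtain a r where ar: "comp bs = a # r" "1 \<le> a" using comp_props[of bs] by blast
  show ?case
  proof (cases b2 rule: comp.cases)
    case 1 then show ?thesis using 3 ar comp_props[of bs] by auto
  next
    case (2 bs') then show ?thesis using "3.prems" ar by simp
  next
    case (3 bs')
    obtain a' r' where ar': "comp bs' = a' # r'" using comp_props[of bs'] by blast
    have "comp bs = comp bs'" using "3.prems" ar ar' 3 by simp
    then show ?thesis using "3.IH" 3 by simp
  qed
qed

lemma card_C_0: "1 \<le> card (C t 0)"
proof -
  have "[] \<in> C t 0" by (simp add: C_def)
  then have "C t 0 \<noteq> {}" by auto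
  then show ?thesis using finite_C[of t 0] by (simp add: card_gt_0_iff Suc_le_eq)
qed

lemma card_C_1: "1 \<le> card (C 1 m)"
proof -
  have "replicate m 1 \<in> C 1 m" by (simp add: C_def one_enat_def sum_list_replicate)
  then have "C 1 m \<noteq> {}" by auto
  then show ?thesis using finite_C[of 1 m] by (simp add: card_gt_0_iff Suc_le_eq)
qed

lemma card_C_ge: assumes "1 \<le> m" "enat m \<le> t" shows "2 ^ (m - 1) \<le> card (C t m)"
proof -
  let ?B = "{bs :: bool list. set bs \<subseteq> UNIV \<and> length bs = m - 1}"
  have "card ?B = 2 ^ (m - 1)" using card_lists_length_eq[of "UNIV :: bool set" "m - 1"] by simp
  moreover have "card ?B \<le> card (C t m)"
  proof (rule card_inj_on_le[OF _ _ finite_C])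
    show "inj_on comp ?B" using comp_inj by (auto intro: inj_onI)
    show "comp ` ?B \<subseteq> C t m"
    proof
      fix c assume "c \<in> comp ` ?B"
      then obtain bs where bs: "length bs = m - 1" "c = comp bs" by auto
      have s: "sum_list c = m" "\<forall>b\<in>set c. 1 \<le> b" using comp_props[of bs] bs assms(1) by auto
      have "\<forall>b\<in>set c. enat b \<le> t"
      proof
        fix b assume "b \<in> set c"
        then have "b \<le> m" using s(1) member_le_sum_list by fastforce
        then show "enat b \<le> t" using assms(2) by (meson enat_ord_simps(1) order_trans)
      qed
      then show "c \<in> C t m" using s by (auto simp: C_def)
    qed
  qed
  ultimately show ?thesis by simp
qed

lemma nosum1:
  assumes x: "1/4 < x"
  shows "\<not> summable (\<lambda>n. real (card (Rset 1 n)) * x ^ n)"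
proof
  assume sm: "summable (\<lambda>n. real (card (Rset 1 n)) * x ^ n)"
  have x0: "0 \<le> x" using x by simp
  obtain E where E: "1 \<le> E" "\<And>M. 1 + (\<Sum>m\<le>M. real (card (C 1 m)) * (x * E) ^ (m + 1)) \<le> E"
    using limit_ineq[OF x0 _ sm] by (auto simp: one_enat_def)
  have "1 + (\<Sum>m\<le>M. (x * E) ^ (m + 1)) \<le> E" for M
  proof -
    have "(\<Sum>m\<le>M. (x * E) ^ (m + 1)) \<le> (\<Sum>m\<le>M. real (card (C 1 m)) * (x * E) ^ (m + 1))"
    proof (rule sum_mono)
      fix m
      have "1 \<le> real (card (C 1 m))" using card_C_1[of m] by simp
      moreover have "0 \<le> (x * E) ^ (m + 1)" using x0 E by simp
      ultimately show "(x * E) ^ (m + 1) \<le> real (card (C 1 m)) * (x * E) ^ (m + 1)"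
        by (metis mult_right_mono mult_1)
    qed
    then show ?thesis using E(2)[of M] by linarith
  qed
  then have "x \<le> 1/4" using A1[of x E] x E by auto
  then show False using x by simp
qed

lemma nosumt:
  assumes t: "22 \<le> t" and x: "1/5 + (9/10) ^ t < x"
  shows "\<not> summable (\<lambda>n. real (card (Rset (enat t) n)) * x ^ n)"
proof
  assume sm: "summable (\<lambda>n. real (card (Rset (enat t) n)) * x ^ n)"
  have "0 \<le> (9/10::real) ^ t" by simp
  then have x0: "0 < x" using x by linarith
  obtain E where E: "1 \<le> E" "\<And>M. 1 + (\<Sum>m\<le>M. real (card (C (enat t) m)) * (x * E) ^ (m + 1)) \<le> E"
    using limit_ineq[OF _ _ sm] x0 t by (auto simp: one_enat_def)
  define y where "y = x * E"
  have y0: "0 \<le> y" using x0 E by (simp add: y_def)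
  obtain n where n: "t = Suc n" using t by (cases t) auto
  have "y + y^2 * (\<Sum>k<t. (2 * y) ^ k) \<le> (\<Sum>m\<le>t. real (card (C (enat t) m)) * y ^ (m + 1))"
  proof -
    have "(\<Sum>m\<le>t. real (card (C (enat t) m)) * y ^ (m + 1)) =
      real (card (C (enat t) 0)) * y + (\<Sum>k\<le>n. real (card (C (enat t) (Suc k))) * y ^ (Suc k + 1))"
      unfolding n by (subst sum.atMost_Suc_shift) simp
    moreover have "y \<le> real (card (C (enat t) 0)) * y"
      using card_C_0[of "enat t"] y0 by (metis mult_right_mono mult_1 of_nat_1 of_nat_le_iff)
    moreover have "y^2 * (\<Sum>k<t. (2 * y) ^ k) \<le> (\<Sum>k\<le>n. real (card (C (enat t) (Suc k))) * y ^ (Suc k + 1))"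
    proof -
      have "y^2 * (\<Sum>k<t. (2 * y) ^ k) = (\<Sum>k\<le>n. 2 ^ k * y ^ (Suc k + 1))"
        unfolding n lessThan_Suc_atMost sum_distrib_left
        by (rule sum.cong) (auto simp: power_mult_distrib power_add power2_eq_square)
      also have "\<dots> \<le> (\<Sum>k\<le>n. real (card (C (enat t) (Suc k))) * y ^ (Suc k + 1))"
      proof (rule sum_mono)
        fix k assume k: "k \<in> {..n}"
        have "2 ^ (Suc k - 1) \<le> card (C (enat t) (Suc k))" by (rule card_C_ge) (use k n in auto)
        then have "(2::real) ^ k \<le> real (card (C (enat t) (Suc k)))"
          by (metis diff_Suc_1 numeral_power_le_of_nat_cancel_iff)
        then show "2 ^ k * y ^ (Suc k + 1) \<le> real (card (C (enat t) (Suc k))) * y ^ (Suc k + 1)"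
          using y0 by (intro mult_right_mono) auto
      qed
      finally show ?thesis .
    qed
    ultimately show ?thesis by linarith
  qed
  then have "1 + x * E + (x * E)^2 * (\<Sum>k<t. (2 * (x * E)) ^ k) \<le> E"
    using E(2)[of t] unfolding y_def by linarith
  then have "x \<le> 1/5 + (9/10) ^ t" by (intro A2[OF t x0]) (use E(1) in simp_all)
  then show False using x by simp
qed

lemma Rset_mono: "t \<le> t' \<Longrightarrow> Rset t n \<subseteq> Rset t' n"
proof -
  assume tt: "t \<le> t'"
  have "rwalk t h g w = Some z \<Longrightarrow> rwalk t' h g w = Some z" for h g w z
  proof (induction w arbitrary: h g)
    case Nil then show ?case by simp
  next
    case (Cons a r) then show ?case using tt by (cases a) (auto split: if_splits intro: order_trans)
  qed
  then show ?thesis by (auto simp: Rset_def)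
qed

lemma card_mono_t: "t \<le> t' \<Longrightarrow> card (Rset t n) \<le> card (Rset t' n)"
  by (rule card_mono[OF finite_Rset Rset_mono])

lemma conv_radius_anti:
  fixes a b :: "nat \<Rightarrow> real"
  assumes "\<And>n. 0 \<le> a n" "\<And>n. a n \<le> b n"
  shows "conv_radius b \<le> conv_radius a"
proof (rule conv_radius_geI_ex')
  fix r :: real assume r: "0 < r" "ereal r < conv_radius b"
  have "summable (\<lambda>n. b n * of_real r ^ n)" using summable_in_conv_radius[of "of_real r" b] r by simp
  then show "summable (\<lambda>n. a n * of_real r ^ n)"
    by (rule summable_comparison_test') (use assms r in \<open>auto intro: mult_right_mono\<close>)
qed

lemma r_rad_eq: "r_rad t = conv_radius (\<lambda>n. real (card (Rset t n)))"
  unfolding r_rad_def count_eq ..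

lemma r_rad_anti: "t \<le> t' \<Longrightarrow> r_rad t' \<le> r_rad t"
  unfolding r_rad_eq by (rule conv_radius_anti) (auto simp: card_mono_t)

lemma geI:
  assumes B: "\<And>n. real (card (Rset t n)) * q ^ n \<le> 2" and q: "0 < q"
  shows "ereal q \<le> r_rad t"
  unfolding r_rad_eq
proof (rule conv_radius_geI_ex')
  fix r :: real assume r: "0 < r" "ereal r < ereal q"
  then have rq: "r < q" by simp
  show "summable (\<lambda>n. real (card (Rset t n)) * of_real r ^ n)"
  proof (rule summable_comparison_test')
    show "summable (\<lambda>n. 2 * (r / q) ^ n)" using r rq q by (intro summable_mult summable_geometric) auto
    fix n
    have "real (card (Rset t n)) * r ^ n = (real (card (Rset t n)) * q ^ n) * (r / q) ^ n"
      using q by (simp add: power_divide)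
    also have "\<dots> \<le> 2 * (r / q) ^ n" using B[of n] r q by (intro mult_right_mono) auto
    finally show "norm (real (card (Rset t n)) * of_real r ^ n) \<le> 2 * (r / q) ^ n" using r by simp
  qed
qed

lemma r1_ge: "ereal (1/4) \<le> r_rad 1"
  by (rule geI) (use bound4 in auto)

lemma rinf_ge: "ereal (1/5) \<le> r_rad \<infinity>"
  by (rule geI) (use bound5 in auto)

lemma r1_le: "r_rad 1 \<le> ereal (1/4)"
  unfolding r_rad_eq
  by (rule conv_radius_leI_ex') (use nosum1 in auto)

lemma rt_le: "22 \<le> t \<Longrightarrow> r_rad (enat t) \<le> ereal (1/5 + (9/10) ^ t)"
  unfolding r_rad_eq
  by (rule conv_radius_leI_ex') (use nosumt in auto)

lemma rinf_le: "r_rad \<infinity> \<le> ereal (1/5)"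
  unfolding r_rad_eq
proof (rule conv_radius_leI_ex')
  fix r :: real assume r: "0 < r" "ereal (1/5) < ereal r"
  then have r5: "1/5 < r" by simp
  obtain k where k: "(9/10::real) ^ k < r - 1/5" using real_arch_pow_inv[of "r - 1/5" "9/10"] r5 by auto
  define t where "t = max k 22"
  have "(9/10::real) ^ t \<le> (9/10) ^ k" unfolding t_def by (rule power_decreasing) auto
  then have x: "1/5 + (9/10) ^ t < r" using k by linarith
  have t22: "22 \<le> t" by (simp add: t_def)
  show "\<not> summable (\<lambda>n. real (card (Rset \<infinity> n)) * of_real r ^ n)"
  proof
    assume "summable (\<lambda>n. real (card (Rset \<infinity> n)) * of_real r ^ n)"
    then have "summable (\<lambda>n. real (card (Rset (enat t) n)) * r ^ n)"
      by (rule summable_comparison_test') (use r card_mono_t in \<open>auto intro: mult_right_mono\<close>)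
    then show False using nosumt[OF t22 x] by simp
  qed
qed simp

lemma per_t:
  assumes t1: "1 \<le> t" and ri: "r_rad \<infinity> = ereal (1/5)" and r1: "r_rad 1 = ereal (1/4)"
  shows "ereal (1/5) \<le> r_rad (enat t) \<and> r_rad (enat t) - ereal (1/5) \<le> ereal (1 * (9/10) ^ t)"
proof -
    have lo: "ereal (1/5) \<le> r_rad (enat t)" using r_rad_anti[of "enat t" \<infinity>] ri by simp
    have up: "r_rad (enat t) \<le> ereal (1/5 + (9/10) ^ t)"
    proof (cases "22 \<le> t")
      case True then show ?thesis by (rule rt_le)
    next
      case False
      have "r_rad (enat t) \<le> r_rad 1" using r_rad_anti[of 1 "enat t"] t1 by (simp add: one_enat_def)
      also have "\<dots> = ereal (1/4)" by (rule r1)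
      also have "\<dots> \<le> ereal (1/5 + (9/10) ^ t)"
      proof -
        have "(9/10::real) ^ 21 \<le> (9/10) ^ t" by (rule power_decreasing) (use False in auto)
        moreover have "1/20 \<le> (9/10::real) ^ 21" by (simp add: power_divide)
        ultimately have "1/4 \<le> 1/5 + (9/10::real) ^ t" by linarith
        then show ?thesis by simp
      qed
      finally show ?thesis .
    qed
    obtain r where r: "r_rad (enat t) = ereal r" using lo up by (cases "r_rad (enat t)") auto
    have "r_rad (enat t) - ereal (1/5) \<le> ereal (1 * (9/10) ^ t)" using up r by simp
    then show ?thesis using lo by simp
qed

theorem mainTheorem7:
  shows "r_rad 1 = ereal (1/4) \<and> r_rad \<infinity> = ereal (1/5) \<and>
    (\<exists>C::real. \<exists>c::real. C > 0 \<and> 0 < c \<and> c < 1 \<and>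
      (\<forall>t::nat. t \<ge> 1 \<longrightarrow>
         ereal (1/5) \<le> r_rad (enat t) \<and> r_rad (enat t) - ereal (1/5) \<le> ereal (C * c ^ t)))"
proof -
  have r1: "r_rad 1 = ereal (1/4)" using r1_ge r1_le by (rule antisym[rotated])
  have ri: "r_rad \<infinity> = ereal (1/5)" using rinf_ge rinf_le by (rule antisym[rotated])
  have "\<forall>t::nat. t \<ge> 1 \<longrightarrow>
         ereal (1/5) \<le> r_rad (enat t) \<and> r_rad (enat t) - ereal (1/5) \<le> ereal (1 * (9/10) ^ t)"
    using per_t[OF _ ri r1] by blast
  then show ?thesis using r1 ri by (intro conjI exI[of _ "1::real"] exI[of _ "9/10::real"]) auto
qed


end
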